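(* Let $f(z)=\sum_{k\ge0}a_kz^k$ be an analytic function that is not a polynomial, with radius of convergence $R\in(0,\infty]$, and let $a_{n_0}$ be its first nonzero coefficient. Then the optimal radii $r_*(n)$ satisfy $r_*(n)\le r_*(n+1)$ for all $n>n_0$, and $\lim_{n\to\infty}r_*(n)=R$. Furthermore: if $r_*(n)=R$ then $R<\infty$, $\|f\|_{H^1(D_R)}<\infty$ and $\nu<\infty$; and if $R<\infty$, $\|f\|_{H^1(D_R)}<\infty$ and $\nu<n$, then $r_*(n)=R$.
   Context: $M_1(r)=\frac{1}{2\pi}\int_0^{2\pi}|f(re^{i\theta})|\,d\theta$ for $0<r<R$; if $R<\infty$ set $M_1(R)=\|f\|_{H^1(D_R)}=\lim_{r\to R}M_1(r)\in(0,\infty]$. For $n>n_0$ the optimal radius $r_*(n)$ is the smallest minimizer of $r\mapsto r^{-n}M_1(r)$ over $0<r\le R$ (over $0<r<\infty$ if $R=\infty$); such minimizers exist. With $\sigma(r)=\log M_1(r)$, $\nu=\sup_{0<r<R}r\sigma'(r)=\lim_{r\to R}r\sigma'(r)\in(0,\infty]$. *)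

theory Defs
  imports "HOL-Analysis.Analysis"
begin

definition pser :: "(nat \<Rightarrow> complex) \<Rightarrow> complex \<Rightarrow> complex" where
  "pser a z = (\<Sum>k. a k * z ^ k)"

definition M1 :: "(nat \<Rightarrow> complex) \<Rightarrow> real \<Rightarrow> real" where
  "M1 a r = (1 / (2 * pi)) * integral {0..2*pi} (\<lambda>\<theta>. norm (pser a (complex_of_real r * cis \<theta>)))"

text \<open>Hardy norm on the boundary disc: M_1(R) = lim_{r \<rightarrow> R-} M_1(r) (in the extended reals);
  only meaningful when R is finite.\<close>
definition H1norm :: "(nat \<Rightarrow> complex) \<Rightarrow> ereal" where
  "H1norm a = Lim (at_left (real_of_ereal (conv_radius a))) (\<lambda>r. ereal (M1 a r))"

definition radii :: "(nat \<Rightarrow> complex) \<Rightarrow> real set" where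
  "radii a = {r. 0 < r \<and> ereal r \<le> conv_radius a}"

definition objective :: "(nat \<Rightarrow> complex) \<Rightarrow> nat \<Rightarrow> real \<Rightarrow> ereal" where
  "objective a n r =
     (if ereal r < conv_radius a then ereal (M1 a r / r ^ n)
      else H1norm a / ereal (r ^ n))"

definition opt_radius :: "(nat \<Rightarrow> complex) \<Rightarrow> nat \<Rightarrow> real" where
  "opt_radius a n = (THE r. r \<in> radii a \<and> (\<forall>s\<in>radii a. objective a n r \<le> objective a n s)
       \<and> (\<forall>s\<in>radii a. objective a n s = objective a n r \<longrightarrow> r \<le> s))"

definition sigma :: "(nat \<Rightarrow> complex) \<Rightarrow> real \<Rightarrow> real" where
  "sigma a r = ln (M1 a r)"

definition nu :: "(nat \<Rightarrow> complex) \<Rightarrow> ereal" where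
  "nu a = (SUP r\<in>{r. 0 < r \<and> ereal r < conv_radius a}. ereal (r * deriv (sigma a) r))"

end

theory Submission
  imports Defs "HOL-Complex_Analysis.Complex_Analysis"
begin

lemma integral_cis_int:
  fixes m :: int
  shows "((\<lambda>\<theta>. cis (of_int m * \<theta>)) has_integral (if m = 0 then 2*pi else 0)) {0..2*pi}"
proof (cases "m = 0")
  case True
  then show ?thesis using has_integral_const_real[of "1::complex" 0 "2*pi"] by (simp add: scaleR_conv_of_real)
next
  case False
  have "((\<lambda>x. exp ((\<i> * of_int m) * of_real x) / (\<i> * of_int m)) has_vector_derivative exp ((\<i> * of_int m) * of_real t)) (at t within {0..2*pi})" for t
    using False
    by (intro derivative_eq_intros has_complex_derivative_imp_has_vector_derivative [unfolded o_def] | simp)+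
  then have "((\<lambda>t. exp ((\<i> * of_int m) * of_real t)) has_integral
      exp ((\<i> * of_int m) * of_real (2*pi)) / (\<i> * of_int m) - exp ((\<i> * of_int m) * of_real 0) / (\<i> * of_int m)) {0..2*pi}"
    by (intro fundamental_theorem_of_calculus) auto
  moreover have "exp ((\<i> * of_int m) * of_real (2*pi)) = 1"
    using exp_integer_2pi[of "of_int m"] by (simp add: algebra_simps)
  ultimately show ?thesis using False
    by (simp add: cis_conv_exp algebra_simps)
qed

context fixes a :: "nat \<Rightarrow> complex" begin

lemma pser_has_deriv:
  assumes "ereal (norm z) < conv_radius a"
  shows "(pser a has_field_derivative (\<Sum>n. diffs a n * z^n)) (at z within A)"
  using has_field_derivative_powser[OF assms] unfolding pser_def[abs_def] by simp

lemma pser_holo: "pser a holomorphic_on eball 0 (conv_radius a)"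
  by (subst holomorphic_on_open) (auto intro!: exI pser_has_deriv)

lemma pser_cont: "continuous_on (eball 0 (conv_radius a)) (pser a)"
  by (rule holomorphic_on_imp_continuous_on[OF pser_holo])

lemma deriv_pser_cont: "continuous_on (eball 0 (conv_radius a)) (deriv (pser a))"
  by (rule holomorphic_on_imp_continuous_on[OF holomorphic_deriv[OF pser_holo]]) simp

lemma in_eball_circ:
  assumes "ereal \<bar>\<rho>\<bar> < conv_radius a"
  shows "complex_of_real \<rho> * cis \<theta> \<in> eball 0 (conv_radius a)"
  using assms by (simp add: norm_mult)

lemma cont_circ:
  assumes "ereal \<bar>\<rho>\<bar> < conv_radius a"
  shows "continuous_on S (\<lambda>\<theta>. pser a (complex_of_real \<rho> * cis \<theta>))"
  by (rule continuous_on_compose2[OF pser_cont]) (auto intro!: continuous_intros in_eball_circ assms)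

lemma coeff_integral:
  assumes "0 \<le> \<rho>" "ereal \<rho> < conv_radius a"
  shows "((\<lambda>\<theta>. pser a (of_real \<rho> * cis \<theta>) * cis (-(real k * \<theta>))) has_integral 2*pi * a k * of_real \<rho> ^ k) {0..2*pi}"
proof -
  define g where "g N \<theta> = (\<Sum>j<N. a j * (of_real \<rho> * cis \<theta>)^j) * cis(-(real k*\<theta>))" for N \<theta>
  have ul0: "uniform_limit (cball 0 \<rho>) (\<lambda>n x. \<Sum>i<n. a i * (x - 0) ^ i) (\<lambda>x. suminf (\<lambda>i. a i * (x - 0) ^ i)) sequentially"
    by (rule powser_uniform_limit) (use assms in simp)
  have ul: "uniform_limit {0..2*pi} g (\<lambda>\<theta>. pser a (of_real \<rho> * cis \<theta>) * cis (-(real k * \<theta>))) sequentially"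
    unfolding uniform_limit_iff
  proof (intro allI impI)
    fix e :: real assume "e > 0"
    with ul0 have "\<forall>\<^sub>F n in sequentially. \<forall>x\<in>cball 0 \<rho>. dist (\<Sum>i<n. a i * (x - 0) ^ i) (suminf (\<lambda>i. a i * (x - 0) ^ i)) < e"
      by (auto simp: uniform_limit_iff)
    then show "\<forall>\<^sub>F n in sequentially. \<forall>x\<in>{0..2*pi}. dist (g n x) (pser a (of_real \<rho> * cis x) * cis (-(real k * x))) < e"
    proof eventually_elim
      case (elim n)
      show ?case
      proof
        fix x :: real
        have "of_real \<rho> * cis x \<in> cball 0 \<rho>" using assms by (simp add: norm_mult)
        with elim have "dist (\<Sum>i<n. a i * (of_real \<rho> * cis x) ^ i) (pser a (of_real \<rho> * cis x)) < e"
          by (auto simp: pser_def)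
        then show "dist (g n x) (pser a (of_real \<rho> * cis x) * cis (-(real k * x))) < e"
          by (simp add: g_def dist_norm norm_mult flip: left_diff_distrib)
      qed
    qed
  qed
  have cont: "continuous_on {0..2*pi} (g n)" for n
    unfolding g_def by (intro continuous_intros)
  obtain I J where I: "\<And>n. (g n has_integral I n) {0..2*pi}"
    and J: "((\<lambda>\<theta>. pser a (of_real \<rho> * cis \<theta>) * cis (-(real k * \<theta>))) has_integral J) {0..2*pi}"
    and IJ: "I \<longlonglongrightarrow> J"
    by (rule uniform_limit_integral[OF ul cont]) auto
  have In: "I n = 2*pi * a k * of_real \<rho> ^ k" if "n > k" for n
  proof -
    have geq: "g n \<theta> = (\<Sum>j<n. (a j * of_real \<rho> ^ j) * cis (of_int (int j - int k) * \<theta>))" for \<theta>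
    proof -
      have c: "cis \<theta> ^ j * cis (-(real k*\<theta>)) = cis (of_int (int j - int k) * \<theta>)" for j
        by (simp only: Complex.DeMoivre cis_mult) (simp add: algebra_simps)
      show ?thesis
        unfolding g_def sum_distrib_right
        by (intro sum.cong refl) (simp add: power_mult_distrib mult.assoc c)
    qed
    have "(g n has_integral (\<Sum>j<n. (a j * of_real \<rho> ^ j) * (if int j - int k = 0 then 2*pi else 0))) {0..2*pi}"
      unfolding geq[abs_def]
      by (intro has_integral_sum has_integral_mult_right integral_cis_int) auto
    also have "(\<Sum>j<n. (a j * of_real \<rho> ^ j) * (if int j - int k = 0 then 2*pi else 0)) = (\<Sum>j<n. if j = k then (a k * of_real \<rho> ^ k) * (2*pi) else 0)"
      by (intro sum.cong refl) auto
    also have "\<dots> = 2*pi * a k * of_real \<rho> ^ k" using that by (simp add: sum.delta)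
    finally show ?thesis using I[of n] has_integral_unique by blast
  qed
  have "I \<longlonglongrightarrow> 2*pi * a k * of_real \<rho> ^ k"
    by (rule Lim_transform_eventually[OF tendsto_const]) (use In in \<open>auto simp: eventually_at_top_linorder intro!: exI[of _ "Suc k"]\<close>)
  with IJ have "J = 2*pi * a k * of_real \<rho> ^ k" using LIMSEQ_unique by blast
  with J show ?thesis by simp
qed

lemma M1_integrable:
  assumes "ereal \<bar>\<rho>\<bar> < conv_radius a"
  shows "(\<lambda>\<theta>. norm (pser a (complex_of_real \<rho> * cis \<theta>))) integrable_on {0..2*pi}"
  by (intro integrable_continuous_real continuous_intros cont_circ assms)

lemma cauchy_est:
  assumes "0 \<le> \<rho>" "ereal \<rho> < conv_radius a"
  shows "norm (a k) * \<rho> ^ k \<le> M1 a \<rho>"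
proof -
  have "norm (integral {0..2*pi} (\<lambda>\<theta>. pser a (of_real \<rho> * cis \<theta>) * cis (-(real k * \<theta>))))
      \<le> integral {0..2*pi} (\<lambda>\<theta>. norm (pser a (complex_of_real \<rho> * cis \<theta>)))"
    by (intro integral_norm_bound_integral M1_integrable integrable_continuous_real continuous_intros cont_circ)
       (use assms in \<open>auto simp: norm_mult\<close>)
  also have "integral {0..2*pi} (\<lambda>\<theta>. pser a (of_real \<rho> * cis \<theta>) * cis (-(real k * \<theta>))) = 2*pi * a k * of_real \<rho> ^ k"
    using coeff_integral[OF assms] by (rule integral_unique)
  finally have "2 * pi * (norm (a k) * \<rho> ^ k) \<le> integral {0..2*pi} (\<lambda>\<theta>. norm (pser a (complex_of_real \<rho> * cis \<theta>)))"
    using assms by (simp add: norm_mult norm_power)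
  then show ?thesis unfolding M1_def by (simp add: field_simps)
qed

end

lemma periodic_shift:
  fixes h :: "real \<Rightarrow> real"
  assumes cont: "continuous_on UNIV h" and per: "\<And>x. h (x + 2*pi) = h x"
    and \<beta>: "0 \<le> \<beta>" "\<beta> \<le> 2*pi"
  shows "integral {0..2*pi} (\<lambda>\<theta>. h (\<theta> + \<beta>)) = integral {0..2*pi} h"
proof -
  have int: "\<And>u v. h integrable_on {u..v}"
    by (intro integrable_continuous_real continuous_on_subset[OF cont]) auto
  have "integral {0..2*pi} (\<lambda>\<theta>. h (\<theta> + \<beta>)) = integral {0..2*pi} (h \<circ> (+) \<beta>)"
    by (simp add: o_def add.commute)
  also have "\<dots> = integral {\<beta>..2*pi+\<beta>} h"
    using integral_shift_Icc_real[of 0 "2*pi" h \<beta>] by (simp add: add.commute)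
  also have "\<dots> = integral {\<beta>..2*pi} h + integral {2*pi..2*pi+\<beta>} h"
    using Henstock_Kurzweil_Integration.integral_combine[where f=h and a=\<beta> and c="2*pi" and b="2*pi+\<beta>"] \<beta> int by simp
  also have "integral {2*pi..2*pi+\<beta>} h = integral {0..\<beta>} (h \<circ> (+) (2*pi))"
    using integral_shift_Icc_real[of 0 \<beta> h "2*pi"] by (simp add: add.commute)
  also have "h \<circ> (+) (2*pi) = h" using per by (auto simp: add.commute)
  also have "integral {\<beta>..2*pi} h + integral {0..\<beta>} h = integral {0..2*pi} h"
    using Henstock_Kurzweil_Integration.integral_combine[where f=h and a=0 and c=\<beta> and b="2*pi"] \<beta> int by simp
  finally show ?thesis .
qed

context fixes a :: "nat \<Rightarrow> complex" begin

lemma M1_rot: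
  assumes "ereal (norm z) < conv_radius a"
  shows "integral {0..2*pi} (\<lambda>\<theta>. norm (pser a (z * cis \<theta>))) = 2*pi * M1 a (norm z)"
proof -
  define h where "h \<theta> = norm (pser a (of_real (norm z) * cis \<theta>))" for \<theta>
  define \<beta> where "\<beta> = (if Arg z \<ge> 0 then Arg z else Arg z + 2*pi)"
  have \<beta>: "0 \<le> \<beta>" "\<beta> \<le> 2*pi" using Arg_bounded[of z] by (auto simp: \<beta>_def)
  have cb: "cis \<beta> = cis (Arg z)"
    by (auto simp: \<beta>_def simp flip: cis_mult)
  have z: "z = of_real (norm z) * cis (Arg z)"
    using rcis_cmod_Arg[of z] by (simp add: rcis_def)
  have eq: "z * cis \<theta> = of_real (norm z) * cis (\<theta> + \<beta>)" for \<theta>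
    by (subst z) (simp add: cb flip: cis_mult)
  have hc: "continuous_on UNIV h"
    unfolding h_def by (intro continuous_intros cont_circ) (use assms in simp)
  have hp: "h (x + 2*pi) = h x" for x
    by (simp add: h_def flip: cis_mult)
  have "integral {0..2*pi} (\<lambda>\<theta>. norm (pser a (z * cis \<theta>))) = integral {0..2*pi} (\<lambda>\<theta>. h (\<theta> + \<beta>))"
    by (simp add: eq h_def)
  also have "\<dots> = integral {0..2*pi} h" by (rule periodic_shift[OF hc hp \<beta>])
  also have "\<dots> = 2*pi * M1 a (norm z)" by (simp add: M1_def h_def[abs_def])
  finally show ?thesis .
qed

lemma M1_nonneg: "0 \<le> M1 a \<rho>"
proof (cases "(\<lambda>\<theta>. norm (pser a (complex_of_real \<rho> * cis \<theta>))) integrable_on {0..2*pi}")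
  case True
  then show ?thesis
    unfolding M1_def by (intro mult_nonneg_nonneg Henstock_Kurzweil_Integration.integral_nonneg) auto
next
  case False
  then show ?thesis unfolding M1_def by (simp add: not_integrable_integral)
qed

lemma M1_pos:
  assumes "a k \<noteq> 0" "0 < \<rho>" "ereal \<rho> < conv_radius a"
  shows "0 < M1 a \<rho>"
proof -
  have "0 < norm (a k) * \<rho> ^ k" using assms by simp
  also have "\<dots> \<le> M1 a \<rho>" by (rule cauchy_est) (use assms in auto)
  finally show ?thesis .
qed

lemma M1_isCont:
  assumes "0 \<le> \<rho>0" "ereal \<rho>0 < conv_radius a"
  shows "isCont (M1 a) \<rho>0"
proof -
  obtain s where s: "ereal \<rho>0 < ereal s" "ereal s < conv_radius a"
    using ereal_dense2[OF assms(2)] by blast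
  have "cball 0 s \<subseteq> eball 0 (conv_radius a)" using s(2) by (auto simp: dist_norm) (meson ereal_less_eq(3) le_less_trans)
  then have uc: "uniformly_continuous_on (cball 0 s) (pser a)"
    by (intro compact_uniformly_continuous continuous_on_subset[OF pser_cont]) auto
  show ?thesis unfolding continuous_at_eps_delta
  proof (intro allI impI)
    fix e :: real assume e: "e > 0"
    then obtain d where d: "d > 0" and dd: "\<And>x x'. x \<in> cball 0 s \<Longrightarrow> x' \<in> cball 0 s \<Longrightarrow> dist x' x < d \<Longrightarrow> dist (pser a x') (pser a x) < e/2"
      using uc unfolding uniformly_continuous_on_def by (meson half_gt_zero)
    show "\<exists>\<delta>>0. \<forall>x'. dist x' \<rho>0 < \<delta> \<longrightarrow> dist (M1 a x') (M1 a \<rho>0) < e"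
    proof (intro exI[of _ "min d (s - \<rho>0)"] conjI allI impI)
      show "min d (s - \<rho>0) > 0" using d s by auto
      fix \<rho> assume \<rho>: "dist \<rho> \<rho>0 < min d (s - \<rho>0)"
      have r1: "\<bar>\<rho>\<bar> \<le> s" using \<rho> assms by (auto simp: dist_real_def)
      have er: "ereal \<bar>\<rho>\<bar> < conv_radius a" using r1 s(2) by (meson ereal_less_eq(3) le_less_trans)
      have er0: "ereal \<bar>\<rho>0\<bar> < conv_radius a" using assms by simp
      have pt: "\<bar>norm (pser a (of_real \<rho> * cis \<theta>)) - norm (pser a (of_real \<rho>0 * cis \<theta>))\<bar> \<le> e/2" for \<theta>
      proof -
        have "dist (of_real \<rho> * cis \<theta>) (of_real \<rho>0 * cis \<theta>) = \<bar>\<rho> - \<rho>0\<bar>"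
          by (simp add: dist_norm norm_mult flip: left_diff_distrib of_real_diff)
        then have "dist (pser a (of_real \<rho> * cis \<theta>)) (pser a (of_real \<rho>0 * cis \<theta>)) < e/2"
          using \<rho> r1 s assms by (intro dd) (auto simp: norm_mult dist_real_def)
        then show ?thesis using norm_triangle_ineq3 by (smt (verit) dist_norm)
      qed
      have int1: "(\<lambda>\<theta>. norm (pser a (of_real \<rho> * cis \<theta>)) - norm (pser a (of_real \<rho>0 * cis \<theta>))) integrable_on {0..2*pi}"
        by (intro integrable_diff M1_integrable er er0)
      have int2: "(\<lambda>\<theta>::real. e/2) integrable_on {0..2*pi}"
        by (intro integrable_continuous_real continuous_intros)
      have "\<bar>integral {0..2*pi} (\<lambda>\<theta>. norm (pser a (of_real \<rho> * cis \<theta>)) - norm (pser a (of_real \<rho>0 * cis \<theta>)))\<bar>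
           \<le> integral {0..2*pi} (\<lambda>\<theta>. e/2)"
        using integral_norm_bound_integral[OF int1 int2] pt by simp
      also have "\<dots> = 2*pi * (e/2)" by simp
      finally have "\<bar>integral {0..2*pi} (\<lambda>\<theta>. norm (pser a (of_real \<rho> * cis \<theta>))) - integral {0..2*pi} (\<lambda>\<theta>. norm (pser a (of_real \<rho>0 * cis \<theta>)))\<bar> \<le> 2*pi*(e/2)"
        by (subst (asm) integral_diff) (auto intro!: M1_integrable er er0)
      then have "\<bar>M1 a \<rho> - M1 a \<rho>0\<bar> \<le> e/2"
        unfolding M1_def by (simp add: field_simps flip: right_diff_distrib abs_mult)
      then show "dist (M1 a \<rho>) (M1 a \<rho>0) < e" using e by (simp add: dist_real_def)
    qed
  qed
qed

end

context fixes a :: "nat \<Rightarrow> complex" begin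

lemma F_exists:
  assumes "0 < \<rho>" "ereal \<rho> < conv_radius a" "e > 0"
  shows "\<exists>F::complex\<Rightarrow>complex. F holomorphic_on eball 0 (conv_radius a) \<and>
     (\<forall>z\<in>eball 0 (conv_radius a). norm (F z) \<le> M1 a (norm z)) \<and> M1 a \<rho> - e \<le> norm (F (of_real \<rho>))"
proof -
  define w where "w \<theta> = pser a (of_real \<rho> * cis \<theta>)" for \<theta>
  define \<phi> where "\<phi> \<theta> = cnj (w \<theta>) / of_real (max (norm (w \<theta>)) e)" for \<theta>
  define F where "F z = of_real (1/(2*pi)) * integral (cbox 0 (2*pi)) (\<lambda>\<theta>. pser a (z * cis \<theta>) * \<phi> \<theta>)" for z
  have er: "ereal \<bar>\<rho>\<bar> < conv_radius a" using assms by simp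
  have wc: "continuous_on UNIV w" unfolding w_def by (rule cont_circ[OF er])
  have den: "of_real (max (norm (w \<theta>)) e) \<noteq> (0::complex)" for \<theta> using assms by auto
  have \<phi>c: "continuous_on UNIV \<phi>"
    unfolding \<phi>_def using den by (intro continuous_intros wc) auto
  have \<phi>b: "norm (\<phi> \<theta>) \<le> 1" for \<theta>
    using assms by (auto simp: \<phi>_def norm_divide)
  have holo: "F holomorphic_on eball 0 (conv_radius a)"
  proof (subst holomorphic_on_open, simp, intro ballI)
    fix z :: complex assume z: "z \<in> eball 0 (conv_radius a)"
    then obtain s where s: "ereal (norm z) < ereal s" "ereal s < conv_radius a"
      using ereal_dense2 by (metis dist_0_norm in_eball_iff)
    have sub: "x * cis t \<in> eball 0 (conv_radius a)" if "x \<in> ball 0 s" for x :: complex and t :: real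
      using that s(2) by (auto simp: norm_mult dist_norm) (meson ereal_less_eq(3) le_less_trans less_imp_le)
    have "(\<lambda>x. integral (cbox 0 (2*pi)) (\<lambda>\<theta>. pser a (x * cis \<theta>) * \<phi> \<theta>)) field_differentiable at z within ball 0 s"
    proof (rule leibniz_rule_field_differentiable[where fx = "\<lambda>x t. deriv (pser a) (x * cis t) * cis t * \<phi> t"])
      fix x :: complex and t :: real assume x: "x \<in> ball 0 s" and t: "t \<in> cbox 0 (2*pi)"
      have d: "(pser a has_field_derivative deriv (pser a) (x * cis t)) (at (x * cis t))"
        by (rule holomorphic_derivI[OF pser_holo open_eball sub[OF x]])
      have "((\<lambda>x. pser a (x * cis t)) has_field_derivative deriv (pser a) (x * cis t) * cis t) (at x)"
      proof -
        have d2: "((\<lambda>x. x * cis t) has_field_derivative cis t) (at x)"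
          by (auto intro!: derivative_eq_intros)
        show ?thesis
          by (rule DERIV_chain2[where f="pser a" and g="\<lambda>x. x * cis t", OF d d2])
      qed
      note dd = this
      show "((\<lambda>x. pser a (x * cis t) * \<phi> t) has_field_derivative deriv (pser a) (x * cis t) * cis t * \<phi> t) (at x within ball 0 s)"
        by (rule has_field_derivative_at_within[OF DERIV_cmult_right[OF dd]])
    next
      fix x :: complex assume x: "x \<in> ball 0 s"
      have "continuous_on (cbox 0 (2*pi)) (\<lambda>\<theta>. pser a (x * cis \<theta>))"
        by (rule continuous_on_compose2[OF pser_cont]) (auto intro!: continuous_intros sub x)
      then show "(\<lambda>\<theta>. pser a (x * cis \<theta>) * \<phi> \<theta>) integrable_on cbox 0 (2*pi)"
        by (intro integrable_continuous continuous_intros continuous_on_subset[OF \<phi>c]) auto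
    next
      have "continuous_on (ball (0::complex) s \<times> cbox 0 (2*pi)) (\<lambda>p. deriv (pser a) (fst p * cis (snd p)))"
        by (rule continuous_on_compose2[OF deriv_pser_cont]) (auto intro!: continuous_intros sub)
      then have "continuous_on (ball 0 s \<times> cbox 0 (2*pi)) (\<lambda>p. deriv (pser a) (fst p * cis (snd p)) * cis (snd p) * \<phi> (snd p))"
        by (intro continuous_intros continuous_on_compose2[OF \<phi>c]) auto
      then show "continuous_on (ball 0 s \<times> cbox 0 (2*pi)) (\<lambda>(x, t). deriv (pser a) (x * cis t) * cis t * \<phi> t)"
        by (simp add: split_def)
    qed (use s in auto)
    then have "(\<lambda>x. integral (cbox 0 (2*pi)) (\<lambda>\<theta>. pser a (x * cis \<theta>) * \<phi> \<theta>)) field_differentiable at z"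
      using s by (simp add: at_within_open[of z "ball 0 s"])
    then have "F field_differentiable at z"
      unfolding F_def[abs_def] by (intro field_differentiable_mult field_differentiable_const)
    then show "\<exists>f'. (F has_field_derivative f') (at z)"
      by (simp add: field_differentiable_def)
  qed
  have bound: "norm (F z) \<le> M1 a (norm z)" if z: "z \<in> eball 0 (conv_radius a)" for z
  proof -
    have ez: "ereal (norm z) < conv_radius a" using z by simp
    have pc: "continuous_on UNIV (\<lambda>\<theta>. pser a (z * cis \<theta>))"
      by (rule continuous_on_compose2[OF pser_cont]) (auto intro!: continuous_intros simp: norm_mult ez)
    have "norm (integral {0..2*pi} (\<lambda>\<theta>. pser a (z * cis \<theta>) * \<phi> \<theta>)) \<le> integral {0..2*pi} (\<lambda>\<theta>. norm (pser a (z * cis \<theta>)))"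
      using \<phi>b
      by (intro integral_norm_bound_integral integrable_continuous_real continuous_intros
            continuous_on_subset[OF pc] continuous_on_subset[OF \<phi>c])
         (auto simp: norm_mult intro: mult_left_le)
    also have "\<dots> = 2*pi * M1 a (norm z)" by (rule M1_rot[OF ez])
    finally have fin: "norm (integral {0..2*pi} (\<lambda>\<theta>. pser a (z * cis \<theta>) * \<phi> \<theta>)) \<le> 2*pi * M1 a (norm z)" .
    have "norm (F z) = norm (integral {0..2*pi} (\<lambda>\<theta>. pser a (z * cis \<theta>) * \<phi> \<theta>)) / (2*pi)"
      unfolding F_def by (simp add: norm_mult norm_divide cbox_interval)
    with fin show ?thesis by (simp add: divide_le_eq mult.commute)
  qed
  have lower: "M1 a \<rho> - e \<le> norm (F (of_real \<rho>))"
  proof -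
    define G where "G \<theta> = (norm (w \<theta>))^2 / max (norm (w \<theta>)) e" for \<theta>
    have Gc: "continuous_on UNIV G" unfolding G_def using assms by (intro continuous_intros wc) auto
    have wphi: "pser a (of_real \<rho> * cis \<theta>) * \<phi> \<theta> = of_real (G \<theta>)" for \<theta>
      by (simp add: \<phi>_def G_def w_def flip: complex_norm_square of_real_power)
    have "((\<lambda>\<theta>. of_real (G \<theta>) :: complex) has_integral of_real (integral {0..2*pi} G)) {0..2*pi}"
      by (intro has_integral_of_real integrable_integral integrable_continuous_real continuous_on_subset[OF Gc]) auto
    then have FI: "F (of_real \<rho>) = of_real (1/(2*pi) * integral {0..2*pi} G)"
      unfolding F_def wphi by (simp add: integral_unique)
    have Gge: "norm (w \<theta>) - e \<le> G \<theta>" for \<theta>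
    proof (cases "norm (w \<theta>) \<ge> e")
      case True then show ?thesis using assms by (simp add: G_def power2_eq_square)
    next
      case False
      have "0 \<le> (norm (w \<theta>))^2 / e" using assms by simp
      moreover have "G \<theta> = (norm (w \<theta>))^2 / e" using False by (simp add: G_def)
      ultimately show ?thesis using False by linarith
    qed
    have "integral {0..2*pi} (\<lambda>\<theta>. norm (w \<theta>) - e) \<le> integral {0..2*pi} G"
      using Gge by (intro integral_le integrable_continuous_real continuous_intros continuous_on_subset[OF Gc]
          continuous_on_subset[OF wc]) auto
    moreover have "integral {0..2*pi} (\<lambda>\<theta>. norm (w \<theta>) - e) = 2*pi * M1 a \<rho> - 2*pi*e"
      by (subst integral_diff) (auto intro!: integrable_continuous_real continuous_intros cont_circ[OF er]
          simp: M1_def w_def)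
    ultimately have "2*pi * M1 a \<rho> - 2*pi*e \<le> integral {0..2*pi} G" by simp
    then have "M1 a \<rho> - e \<le> 1/(2*pi) * integral {0..2*pi} G" by (simp add: field_simps)
    also have "\<dots> \<le> norm (F (of_real \<rho>))" unfolding FI by (simp only: norm_of_real)
    finally show ?thesis .
  qed
  show ?thesis using holo bound lower by blast
qed

end

context fixes a :: "nat \<Rightarrow> complex" begin

lemma M1_mono:
  assumes "0 < \<rho>" "\<rho> \<le> s" "ereal s < conv_radius a"
  shows "M1 a \<rho> \<le> M1 a s"
proof (rule field_le_epsilon)
  fix e :: real assume e: "0 < e"
  have e\<rho>: "ereal \<rho> < conv_radius a" using assms by (meson ereal_less_eq(3) le_less_trans)
  obtain F :: "complex \<Rightarrow> complex" where holo: "F holomorphic_on eball 0 (conv_radius a)"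
    and bd: "\<And>z. z \<in> eball 0 (conv_radius a) \<Longrightarrow> norm (F z) \<le> M1 a (norm z)"
    and low: "M1 a \<rho> - e \<le> norm (F (of_real \<rho>))"
    using F_exists[OF assms(1) e\<rho> e] by blast
  have cb: "cball 0 s \<subseteq> eball 0 (conv_radius a)"
    using assms(3) by (auto simp: dist_norm) (meson ereal_less_eq(3) le_less_trans)
  have "norm (F (of_real \<rho>)) \<le> M1 a s"
  proof (rule maximum_modulus_frontier[where S="cball 0 s" and f=F and \<xi>="of_real \<rho>"])
    show "F holomorphic_on interior (cball 0 s)"
      by (rule holomorphic_on_subset[OF holo]) (use cb in auto)
    show "continuous_on (closure (cball 0 s)) F"
      using cb by (auto intro: holomorphic_on_imp_continuous_on holomorphic_on_subset[OF holo])
    show "bounded (cball (0::complex) s)" by simp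
    show "norm (F z) \<le> M1 a s" if "z \<in> frontier (cball 0 s)" for z
    proof -
      from that assms have "norm z = s" by auto
      moreover have "z \<in> eball 0 (conv_radius a)" using assms(3) \<open>norm z = s\<close> by simp
      ultimately show ?thesis using bd[of z] by simp
    qed
    show "complex_of_real \<rho> \<in> cball 0 s" using assms by simp
  qed
  with low show "M1 a \<rho> \<le> M1 a s + e" by linarith
qed

lemma M1_qc:
  assumes "0 < r1" "r1 < \<rho>" "\<rho> < r2" "ereal r2 < conv_radius a" "0 < M1 a \<rho>"
  shows "M1 a \<rho> ^ q / \<rho> ^ p \<le> max (M1 a r1 ^ q / r1 ^ p) (M1 a r2 ^ q / r2 ^ p)"
proof -
  define B where "B = max (M1 a r1 ^ q / r1 ^ p) (M1 a r2 ^ q / r2 ^ p)"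
  have e\<rho>: "ereal \<rho> < conv_radius a" using assms by (meson ereal_less_eq(3) le_less_trans less_imp_le)
  have key: "(M1 a \<rho> - e) ^ q / \<rho> ^ p \<le> B" if e: "0 < e" "e < M1 a \<rho>" for e
  proof -
    obtain F :: "complex \<Rightarrow> complex" where holo: "F holomorphic_on eball 0 (conv_radius a)"
      and bd: "\<And>z. z \<in> eball 0 (conv_radius a) \<Longrightarrow> norm (F z) \<le> M1 a (norm z)"
      and low: "M1 a \<rho> - e \<le> norm (F (of_real \<rho>))"
      using F_exists[OF _ e\<rho> e(1)] assms by auto
    define S where "S = cball (0::complex) r2 - ball 0 r1"
    have Ssub: "S \<subseteq> eball 0 (conv_radius a)"
      using assms(4) by (auto simp: S_def dist_norm) (meson ereal_less_eq(3) le_less_trans)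
    have S0: "z \<in> S \<Longrightarrow> z \<noteq> 0" for z using assms by (auto simp: S_def)
    have clS: "closure S = S" unfolding S_def by (intro closure_closed closed_Diff) auto
    have intS: "interior S \<subseteq> S" by (rule interior_subset)
    have hol: "(\<lambda>z. F z ^ q / z ^ p) holomorphic_on S"
      using S0 by (intro holomorphic_intros holomorphic_on_subset[OF holo Ssub]) auto
    have "norm (F (of_real \<rho>) ^ q / of_real \<rho> ^ p) \<le> B"
    proof (rule maximum_modulus_frontier[where S=S and f="\<lambda>z. F z ^ q / z ^ p" and \<xi>="of_real \<rho>"])
      show "(\<lambda>z. F z ^ q / z ^ p) holomorphic_on interior S"
        using hol intS by (rule holomorphic_on_subset)
      show "continuous_on (closure S) (\<lambda>z. F z ^ q / z ^ p)"
        unfolding clS by (rule holomorphic_on_imp_continuous_on[OF hol])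
      show "bounded S" unfolding S_def by (rule bounded_subset[of "cball 0 r2"]) auto
      show "norm (F z ^ q / z ^ p) \<le> B" if z: "z \<in> frontier S" for z
      proof -
        have zS: "z \<in> S" using z clS by (metis Diff_iff frontier_def)
        have "z \<notin> ball 0 r2 - cball 0 r1"
        proof
          assume "z \<in> ball 0 r2 - cball 0 r1"
          moreover have "open (ball 0 r2 - cball 0 r1)" by auto
          moreover have "ball 0 r2 - cball 0 r1 \<subseteq> S" by (auto simp: S_def)
          ultimately have "z \<in> interior S" by (meson interior_maximal subsetD)
          with z show False by (simp add: frontier_def)
        qed
        with zS have nz: "norm z = r1 \<or> norm z = r2" by (auto simp: S_def)
        have "norm (F z ^ q / z ^ p) = norm (F z) ^ q / norm z ^ p" by (simp add: norm_divide norm_power)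
        also have "\<dots> \<le> M1 a (norm z) ^ q / norm z ^ p"
          using bd[of z] zS Ssub by (intro divide_right_mono power_mono) auto
        also have "\<dots> \<le> B" using nz by (auto simp: B_def)
        finally show ?thesis .
      qed
      show "complex_of_real \<rho> \<in> S" using assms by (auto simp: S_def)
    qed
    then have "norm (F (of_real \<rho>)) ^ q / \<rho> ^ p \<le> B"
      using assms by (simp add: norm_divide norm_power)
    moreover have "(M1 a \<rho> - e) ^ q \<le> norm (F (of_real \<rho>)) ^ q"
      using low e by (intro power_mono) auto
    ultimately show ?thesis using assms
      by (meson divide_right_mono order_trans zero_le_power less_imp_le)
  qed
  have lim: "((\<lambda>e. (M1 a \<rho> - e) ^ q / \<rho> ^ p) \<longlongrightarrow> (M1 a \<rho> - 0) ^ q / \<rho> ^ p) (at_right 0)"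
    using assms by (intro tendsto_intros) auto
  have ev: "eventually (\<lambda>e. (M1 a \<rho> - e) ^ q / \<rho> ^ p \<le> B) (at_right 0)"
    using eventually_at_right_real[OF assms(5)] by eventually_elim (use key in auto)
  have "(M1 a \<rho> - 0) ^ q / \<rho> ^ p \<le> B"
    by (rule tendsto_upperbound[OF lim ev]) simp
  then show ?thesis by (simp add: B_def)
qed

lemma H1_lim:
  assumes R0: "conv_radius a = ereal R0" "0 < R0"
  shows "((\<lambda>r. ereal (M1 a r)) \<longlongrightarrow> H1norm a) (at_left R0)"
    and "H1norm a = (SUP r\<in>{0<..<R0}. ereal (M1 a r))"
proof -
  define S where "S = (SUP r\<in>{0<..<R0}. ereal (M1 a r))"
  have mono: "M1 a x \<le> M1 a y" if "0 < x" "x \<le> y" "y < R0" for x y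
    using that R0 by (intro M1_mono) auto
  have tend: "((\<lambda>r. ereal (M1 a r)) \<longlongrightarrow> S) (at_left R0)"
  proof (rule order_tendstoI)
    fix b assume "b < S"
    then obtain r where r: "r \<in> {0<..<R0}" "b < ereal (M1 a r)" unfolding S_def less_SUP_iff by blast
    have ev: "eventually (\<lambda>x. x \<in> {r<..<R0}) (at_left R0)" using r by (intro eventually_at_left_real) auto
    show "eventually (\<lambda>x. b < ereal (M1 a x)) (at_left R0)"
      using ev
      by eventually_elim (use mono r in \<open>auto intro: less_le_trans\<close>)
  next
    fix b assume "S < b"
    have ev: "eventually (\<lambda>x. x \<in> {0<..<R0}) (at_left R0)" using R0 by (intro eventually_at_left_real) auto
    show "eventually (\<lambda>x. ereal (M1 a x) < b) (at_left R0)"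
      using ev
    proof eventually_elim
      case (elim x)
      then have "ereal (M1 a x) \<le> S" unfolding S_def by (intro SUP_upper) auto
      with \<open>S < b\<close> show ?case by auto
    qed
  qed
  have "H1norm a = S"
    unfolding H1norm_def R0 by (simp add: tendsto_Lim[OF trivial_limit_at_left_real tend])
  with tend show "((\<lambda>r. ereal (M1 a r)) \<longlongrightarrow> H1norm a) (at_left R0)" by simp
  show "H1norm a = (SUP r\<in>{0<..<R0}. ereal (M1 a r))" using \<open>H1norm a = S\<close> by (simp add: S_def)
qed

end

lemma ereal_le_lt: "x \<le> y \<Longrightarrow> ereal y < R \<Longrightarrow> ereal x < R"
  by (meson ereal_less_eq(3) le_less_trans)

context fixes a :: "nat \<Rightarrow> complex" begin

lemma zero_free:
  assumes nz: "a k \<noteq> 0" and r0: "0 < r0" "ereal r0 < conv_radius a"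
  shows "\<exists>\<beta>>r0. ereal \<beta> < conv_radius a \<and> (\<forall>z. r0 < norm z \<and> norm z < \<beta> \<longrightarrow> pser a z \<noteq> 0)"
proof -
  obtain s where s: "ereal r0 < ereal s" "ereal s < conv_radius a"
    using ereal_dense2[OF r0(2)] by blast
  define Z where "Z = {z \<in> cball 0 s. pser a z = 0}"
  have cb: "cball 0 s \<subseteq> eball 0 (conv_radius a)"
    using s(2) by (auto simp: dist_norm) (meson ereal_less_eq(3) le_less_trans)
  have fin: "finite Z"
  proof (rule ccontr)
    assume inf: "infinite Z"
    have "Z \<subseteq> cball 0 s" by (auto simp: Z_def)
    then obtain \<xi> where \<xi>: "\<xi> \<in> cball 0 s" "\<xi> islimpt Z"
      using compact_eq_Bolzano_Weierstrass[of "cball (0::complex) s"] inf by auto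
    have all0: "pser a w = 0" if "w \<in> eball 0 (conv_radius a)" for w
      by (rule analytic_continuation[OF pser_holo open_eball connected_eball, where U=Z and \<xi>=\<xi> and w=w])
         (use \<xi> cb that s(2) in \<open>auto simp: Z_def intro: ereal_le_lt\<close>)
    have "M1 a r0 = 0"
    proof -
      have "norm (pser a (complex_of_real r0 * cis \<theta>)) = 0" for \<theta>
        using all0[OF in_eball_circ] r0 by simp
      then show ?thesis by (simp add: M1_def)
    qed
    moreover have "0 < M1 a r0" by (rule M1_pos[OF nz r0])
    ultimately show False by simp
  qed
  define T where "T = norm ` Z \<inter> {r0<..}"
  define \<beta> where "\<beta> = Min (insert s T)"
  have finT: "finite (insert s T)" using fin by (simp add: T_def)
  have "\<beta> \<in> insert s T" unfolding \<beta>_def using finT by (rule Min_in) simp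
  then have \<beta>r0: "\<beta> > r0" using s by (auto simp: T_def)
  have \<beta>s: "\<beta> \<le> s" unfolding \<beta>_def using finT by simp
  have "ereal \<beta> < conv_radius a" using \<beta>s s(2) by (meson ereal_less_eq(3) le_less_trans)
  moreover have "pser a z \<noteq> 0" if z: "r0 < norm z" "norm z < \<beta>" for z
  proof
    assume "pser a z = 0"
    then have "z \<in> Z" using z \<beta>s by (auto simp: Z_def)
    then have "norm z \<in> insert s T" using z by (auto simp: T_def)
    then have "\<beta> \<le> norm z" unfolding \<beta>_def using finT by simp
    with z show False by simp
  qed
  ultimately show ?thesis using \<beta>r0 by blast
qed

lemma M1_has_deriv:
  assumes "0 < \<alpha>" "\<alpha> < \<rho>" "\<rho> < \<beta>" "ereal \<beta> < conv_radius a"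
    and nz: "\<And>z. \<alpha> < norm z \<Longrightarrow> norm z < \<beta> \<Longrightarrow> pser a z \<noteq> 0"
  shows "\<exists>D. (M1 a has_real_derivative D) (at \<rho>)"
proof -
  define U where "U = {\<alpha><..<\<beta>}"
  define w where "w x t = pser a (complex_of_real x * cis t)" for x t
  define v where "v x t = deriv (pser a) (complex_of_real x * cis t) * cis t" for x t
  define fx where "fx x t = (w x t /\<^sub>R norm (w x t)) \<bullet> v x t" for x t
  have inU: "complex_of_real x * cis t \<in> eball 0 (conv_radius a)" if "x \<in> U" for x t
    using that assms by (auto simp: U_def norm_mult) (meson ereal_less_eq(3) le_less_trans less_imp_le)
  have wnz: "w x t \<noteq> 0" if "x \<in> U" for x t
    using that nz[of "complex_of_real x * cis t"] assms by (auto simp: U_def w_def norm_mult)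
  have der: "((\<lambda>x. norm (w x t)) has_vector_derivative fx x t) (at x within U)" if x: "x \<in> U" for x t
  proof -
    have d: "(pser a has_field_derivative deriv (pser a) (complex_of_real x * cis t)) (at (complex_of_real x * cis t))"
      by (rule holomorphic_derivI[OF pser_holo open_eball inU[OF x]])
    have d2: "((\<lambda>z. z * cis t) has_field_derivative cis t) (at (complex_of_real x))"
      by (auto intro!: derivative_eq_intros)
    have "((\<lambda>z. pser a (z * cis t)) has_field_derivative v x t) (at (complex_of_real x))"
      unfolding v_def by (rule DERIV_chain2[where f="pser a" and g="\<lambda>z. z * cis t", OF d d2])
    then have vd: "((\<lambda>x. w x t) has_vector_derivative v x t) (at x within U)"
      unfolding w_def by (rule has_vector_derivative_real_field)
    have nd: "(norm has_derivative (\<lambda>h. h \<bullet> sgn (w x t))) (at (w x t))"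
      by (rule has_derivative_norm[OF wnz[OF x]])
    have "((\<lambda>x. norm (w x t)) has_derivative (\<lambda>h. (h *\<^sub>R v x t) \<bullet> sgn (w x t))) (at x within U)"
      using has_derivative_compose[OF vd[unfolded has_vector_derivative_def] nd] by simp
    then show ?thesis unfolding has_vector_derivative_def fx_def
      by (rule has_derivative_eq_rhs) (auto simp: sgn_div_norm inner_scaleR_right inner_scaleR_left fun_eq_iff inner_commute)
  qed
  have int: "(\<lambda>t. norm (w x t)) integrable_on cbox 0 (2*pi)" if "x \<in> U" for x
    unfolding w_def using that assms
    by (intro integrable_continuous continuous_intros cont_circ) (auto simp: U_def intro!: ereal_le_lt[of _ \<beta>])
  have cont: "continuous_on (U \<times> cbox 0 (2*pi)) (\<lambda>(x, t). fx x t)"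
  proof -
    have c1: "continuous_on (U \<times> cbox 0 (2*pi)) (\<lambda>p. w (fst p) (snd p))"
      unfolding w_def by (rule continuous_on_compose2[OF pser_cont]) (auto intro!: continuous_intros inU)
    have c2: "continuous_on (U \<times> cbox 0 (2*pi)) (\<lambda>p. v (fst p) (snd p))"
      unfolding v_def by (intro continuous_intros continuous_on_compose2[OF deriv_pser_cont]) (auto intro!: inU)
    have "continuous_on (U \<times> cbox 0 (2*pi)) (\<lambda>p. fx (fst p) (snd p))"
      unfolding fx_def using wnz by (intro continuous_intros c1 c2) auto
    then show ?thesis by (simp add: split_def)
  qed
  have \<rho>U: "\<rho> \<in> U" using assms by (simp add: U_def)
  have "((\<lambda>x. integral (cbox 0 (2*pi)) (\<lambda>t. norm (w x t))) has_vector_derivative integral (cbox 0 (2*pi)) (fx \<rho>)) (at \<rho> within U)"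
    by (rule leibniz_rule_vector_derivative[OF der int cont \<rho>U]) (auto simp: U_def)
  then have "((\<lambda>x. integral (cbox 0 (2*pi)) (\<lambda>t. norm (w x t))) has_vector_derivative integral (cbox 0 (2*pi)) (fx \<rho>)) (at \<rho>)"
    unfolding at_within_open[OF \<rho>U open_greaterThanLessThan[of \<alpha> \<beta>, folded U_def]] .
  then have "((\<lambda>x. integral (cbox 0 (2*pi)) (\<lambda>t. norm (w x t))) has_real_derivative integral (cbox 0 (2*pi)) (fx \<rho>)) (at \<rho>)"
    unfolding has_real_derivative_iff_has_vector_derivative .
  then have "((\<lambda>x. 1/(2*pi) * integral (cbox 0 (2*pi)) (\<lambda>t. norm (w x t))) has_real_derivative 1/(2*pi) * integral (cbox 0 (2*pi)) (fx \<rho>)) (at \<rho>)"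
    by (rule DERIV_cmult)
  moreover have "(\<lambda>x. 1/(2*pi) * integral (cbox 0 (2*pi)) (\<lambda>t. norm (w x t))) = M1 a"
    by (simp add: fun_eq_iff M1_def w_def cbox_interval)
  ultimately show ?thesis by auto
qed

end

lemma ereal_div_pos: "(0::real) < c \<Longrightarrow> x / ereal c = x * ereal (1/c)"
  by (simp add: divide_ereal_def inverse_ereal.simps divide_inverse)

context fixes a :: "nat \<Rightarrow> complex"
  assumes Rpos: "conv_radius a > 0" and nz: "\<exists>m. a m \<noteq> 0"
begin

lemma M1_pos': "0 < r \<Longrightarrow> ereal r < conv_radius a \<Longrightarrow> 0 < M1 a r"
  using nz M1_pos by blast

lemma obj_lt: "0 < r \<Longrightarrow> ereal r < conv_radius a \<Longrightarrow> objective a n r = ereal (M1 a r / r ^ n)"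
  by (simp add: objective_def)

lemma obj_R: "conv_radius a = ereal R0 \<Longrightarrow> objective a n R0 = H1norm a / ereal (R0 ^ n)"
  by (simp add: objective_def)

lemma radii_cases: "r \<in> radii a \<Longrightarrow> (0 < r \<and> ereal r < conv_radius a) \<or> conv_radius a = ereal r"
  by (auto simp: radii_def le_less)

lemma H1_ge: assumes "conv_radius a = ereal R0" "0 < r" "r < R0"
  shows "ereal (M1 a r) \<le> H1norm a"
proof -
  have "0 < R0" using assms by simp
  then show ?thesis using assms H1_lim(2)[OF assms(1)] by (auto intro: SUP_upper)
qed

lemma H1_pos: assumes "conv_radius a = ereal R0" shows "0 < H1norm a"
proof -
  have R0: "0 < R0" using assms Rpos by simp
  have "0 < ereal (M1 a (R0/2))" using M1_pos'[of "R0/2"] R0 assms by simp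
  also have "\<dots> \<le> H1norm a" using H1_ge[OF assms] R0 by simp
  finally show ?thesis .
qed

lemma obj_pos: "r \<in> radii a \<Longrightarrow> 0 < objective a n r"
proof -
  assume r: "r \<in> radii a"
  then have r0: "0 < r" by (simp add: radii_def)
  from radii_cases[OF r] show ?thesis
  proof
    assume "0 < r \<and> ereal r < conv_radius a"
    then show ?thesis using M1_pos'[of r] by (simp add: obj_lt)
  next
    assume R: "conv_radius a = ereal r"
    show ?thesis unfolding obj_R[OF R] ereal_div_pos[OF zero_less_power[OF r0]]
      using H1_pos[OF R] r0 by (simp add: ereal_zero_less_0_iff)
  qed
qed

lemma obj_Suc: "r \<in> radii a \<Longrightarrow> objective a (Suc n) r = objective a n r * ereal (1/r)"
proof -
  assume r: "r \<in> radii a"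
  then have r0: "0 < r" by (simp add: radii_def)
  from radii_cases[OF r] show ?thesis
  proof
    assume "0 < r \<and> ereal r < conv_radius a"
    then show ?thesis by (simp add: obj_lt field_simps)
  next
    assume R: "conv_radius a = ereal r"
    show ?thesis unfolding obj_R[OF R] ereal_div_pos[OF zero_less_power[OF r0]]
      by (simp add: mult.assoc field_simps)
  qed
qed

lemma obj_cont:
  assumes "0 < \<delta>" "{\<delta>..K} \<subseteq> radii a"
  shows "continuous_on {\<delta>..K} (objective a n)"
proof (subst continuous_on_eq_continuous_within, intro ballI)
  fix x assume x: "x \<in> {\<delta>..K}"
  then have xr: "x \<in> radii a" using assms by auto
  have x0: "0 < x" using x assms by simp
  from radii_cases[OF xr] show "continuous (at x within {\<delta>..K}) (objective a n)"
  proof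
    assume xR: "0 < x \<and> ereal x < conv_radius a"
    obtain e where e: "e > 0" "\<And>y. dist y x < e \<Longrightarrow> 0 < y \<and> ereal y < conv_radius a"
    proof (cases "conv_radius a")
      case (real R0)
      show ?thesis
        by (rule that[of "min x (R0 - x)"]) (use xR real in \<open>auto simp: dist_real_def\<close>)
    next
      case PInf
      show ?thesis by (rule that[of x]) (use xR PInf in \<open>auto simp: dist_real_def\<close>)
    next
      case MInf with Rpos show ?thesis by simp
    qed
    have c: "isCont (\<lambda>y. M1 a y / y ^ n) x"
      using x0 xR by (intro continuous_intros M1_isCont) auto
    have t: "((\<lambda>y. ereal (M1 a y / y ^ n)) \<longlongrightarrow> objective a n x) (at x within {\<delta>..K})"
    proof -
      have "((\<lambda>y. M1 a y / y ^ n) \<longlongrightarrow> M1 a x / x ^ n) (at x)" using c by (simp add: isCont_def)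
      then have "((\<lambda>y. M1 a y / y ^ n) \<longlongrightarrow> M1 a x / x ^ n) (at x within {\<delta>..K})"
        by (rule tendsto_within_subset) simp
      then show ?thesis unfolding obj_lt[OF x0 conjunct2[OF xR]] by (rule tendsto_ereal)
    qed
    have "eventually (\<lambda>y. ereal (M1 a y / y ^ n) = objective a n y) (at x within {\<delta>..K})"
      unfolding eventually_at using e by (intro exI[of _ e]) (auto simp: obj_lt)
    then show ?thesis unfolding continuous_within using t by (rule Lim_transform_eventually[rotated])
  next
    assume xR: "conv_radius a = ereal x"
    have "K \<in> radii a" using x assms(2) by auto
    then have "K \<le> x" using xR by (simp add: radii_def)
    with x have Kx: "K = x" by simp
    have tl: "((\<lambda>y. ereal (M1 a y) * ereal (1 / y ^ n)) \<longlongrightarrow> H1norm a * ereal (1 / x ^ n)) (at_left x)"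
      by (intro tendsto_mult_ereal H1_lim(1)[OF xR x0] tendsto_intros) (use x0 in auto)
    have ev: "eventually (\<lambda>y. ereal (M1 a y) * ereal (1 / y ^ n) = objective a n y) (at_left x)"
      using eventually_at_left_real[OF x0] by eventually_elim (auto simp: obj_lt xR)
    have "(objective a n \<longlongrightarrow> objective a n x) (at_left x)"
      unfolding obj_R[OF xR] ereal_div_pos[OF zero_less_power[OF x0]]
      using tl ev by (rule Lim_transform_eventually)
    moreover have "at x within {\<delta>..K} \<le> at_left x"
      unfolding at_within_def Kx by (intro inf_mono order_refl) auto
    ultimately show ?thesis unfolding continuous_within by (rule tendsto_mono[rotated])
  qed
qed

end

context fixes a :: "nat \<Rightarrow> complex"
  assumes Rpos: "conv_radius a > 0" and notpoly: "infinite {k. a k \<noteq> 0}"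
begin

lemma nz: "\<exists>m. a m \<noteq> 0"
  using notpoly by (metis (mono_tags, lifting) empty_Collect_eq finite.emptyI)

lemmas M1p = M1_pos'[OF Rpos nz]
lemmas objlt = obj_lt[OF Rpos nz]
lemmas objR = obj_R[OF Rpos nz]
lemmas objcont = obj_cont[OF Rpos nz]
lemmas objpos = obj_pos[OF Rpos nz]

lemma low_bound:
  assumes "a m \<noteq> 0" "m < n" "0 < s" "ereal s < conv_radius a"
  shows "norm (a m) / s ^ (n - m) \<le> M1 a s / s ^ n"
proof -
  have sn: "s ^ n = s ^ m * s ^ (n - m)" using assms by (simp flip: power_add)
  have "norm (a m) * s ^ m \<le> M1 a s" by (rule cauchy_est) (use assms in auto)
  then have "norm (a m) * s ^ m / s ^ n \<le> M1 a s / s ^ n"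
    using assms by (intro divide_right_mono) auto
  moreover have "norm (a m) * s ^ m / s ^ n = norm (a m) / s ^ (n - m)"
    using assms by (simp add: sn)
  ultimately show ?thesis by simp
qed

lemma opt_exists:
  assumes am: "a m \<noteq> 0" and mn: "m < n"
  shows "\<exists>r\<in>radii a. (\<forall>s\<in>radii a. objective a n r \<le> objective a n s)
            \<and> (\<forall>s\<in>radii a. objective a n s = objective a n r \<longrightarrow> r \<le> s)"
proof -
  obtain r1 where r1': "0 < ereal r1" "ereal r1 < conv_radius a"
    using ereal_dense2[OF Rpos] by blast
  have r1: "0 < r1" using r1' by simp
  define C where "C = M1 a r1 / r1 ^ n"
  have C: "0 < C" unfolding C_def using M1p[OF r1 r1'(2)] r1 by simp
  have Or1: "objective a n r1 = ereal C" unfolding C_def by (rule objlt[OF r1 r1'(2)])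
  define c where "c = norm (a m)"
  have c: "0 < c" using am by (simp add: c_def)
  define \<delta> where "\<delta> = min r1 (min 1 (c/(C+1)))"
  have \<delta>: "0 < \<delta>" "\<delta> \<le> r1" using r1 c C by (auto simp: \<delta>_def)
  have small: "ereal C < objective a n s" if s: "0 < s" "s < \<delta>" for s
  proof -
    have sR: "ereal s < conv_radius a" using s \<delta> r1' by (meson ereal_le_lt less_imp_le less_le_trans)
    have s1: "s \<le> 1" using s by (simp add: \<delta>_def)
    have "s ^ (n - m) \<le> s ^ 1" using s s1 mn by (intro power_decreasing) auto
    then have "c / s \<le> c / s ^ (n - m)" using s c by (intro divide_left_mono) auto
    moreover have "c / s ^ (n - m) \<le> M1 a s / s ^ n"
      unfolding c_def by (rule low_bound[OF am mn s(1) sR])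
    moreover have "C < c / s"
    proof -
      have "s < c/(C+1)" using s by (simp add: \<delta>_def)
      then have "s * (C+1) < c" using C by (simp add: field_simps)
      then show ?thesis using s C by (simp add: field_simps)
    qed
    ultimately show ?thesis using objlt[OF s(1) sR] by simp
  qed
  obtain K where K: "r1 \<le> K" "{\<delta>..K} \<subseteq> radii a" "\<And>s. s \<in> radii a \<Longrightarrow> K < s \<Longrightarrow> ereal C < objective a n s"
  proof (cases "conv_radius a")
    case (real R0)
    show ?thesis
    proof (rule that[of R0])
      show "r1 \<le> R0" using r1' real by simp
      show "{\<delta>..R0} \<subseteq> radii a" using \<delta> real by (auto simp: radii_def)
      show "ereal C < objective a n s" if "s \<in> radii a" "R0 < s" for s
        using that real by (simp add: radii_def)
    qed
  next
    case PInf
    obtain k where k: "k > n" "a k \<noteq> 0" using notpoly by (auto simp: infinite_nat_iff_unbounded)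
    define d where "d = norm (a k)"
    have d: "0 < d" using k by (simp add: d_def)
    define K where "K = max r1 (max 1 (C/d + 1))"
    show ?thesis
    proof (rule that[of K])
      show "r1 \<le> K" by (simp add: K_def)
      show "{\<delta>..K} \<subseteq> radii a" using \<delta> PInf by (auto simp: radii_def)
      show "ereal C < objective a n s" if s: "s \<in> radii a" "K < s" for s
      proof -
        have s1: "1 \<le> s" "0 < s" using s by (auto simp: K_def)
        have sR: "ereal s < conv_radius a" using PInf by simp
        have "d * s ^ k \<le> M1 a s" unfolding d_def by (rule cauchy_est) (use s1 sR in auto)
        moreover have "s ^ k = s ^ n * s ^ (k - n)" using k by (simp flip: power_add)
        ultimately have "d * s ^ (k - n) \<le> M1 a s / s ^ n" using s1 by (simp add: field_simps)
        moreover have "d * s \<le> d * s ^ (k - n)" using s1 k d by (intro mult_left_mono power_increasing[of 1, simplified]) auto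
        moreover have "C < d * s"
        proof -
          have "C/d + 1 < s" using s by (simp add: K_def)
          then have "C + d < d * s" using d by (simp add: field_simps)
          then show ?thesis using d by simp
        qed
        ultimately show ?thesis using objlt[OF s1(2) sR] by simp
      qed
    qed
  next
    case MInf with Rpos show ?thesis by simp
  qed
  have cont: "continuous_on {\<delta>..K} (objective a n)" by (rule objcont[OF \<delta>(1) K(2)])
  define L where "L = {\<delta>..K} \<inter> objective a n -` {..ereal C}"
  have cL: "compact L"
  proof -
    have "closed L" unfolding L_def by (rule continuous_closed_preimage[OF cont]) auto
    moreover have "bounded L" by (rule bounded_subset[of "{\<delta>..K}"]) (auto simp: L_def)
    ultimately show ?thesis by (simp add: compact_eq_bounded_closed)
  qed
  have r1L: "r1 \<in> L" using \<delta> K Or1 by (auto simp: L_def)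
  have "\<exists>x\<in>L. \<forall>y\<in>L. objective a n x \<le> objective a n y"
    by (rule continuous_attains_inf[OF cL _ continuous_on_subset[OF cont]]) (use r1L in \<open>auto simp: L_def\<close>)
  then obtain x where xL: "x \<in> L" and xmin: "\<And>y. y \<in> L \<Longrightarrow> objective a n x \<le> objective a n y"
    by blast
  have OxC: "objective a n x \<le> ereal C" using xL by (auto simp: L_def)
  have out: "ereal C < objective a n s" if "s \<in> radii a" "s \<notin> {\<delta>..K}" for s
  proof -
    have "0 < s" using that by (simp add: radii_def)
    then show ?thesis using that small K(3) by (auto simp: not_le)
  qed
  have glob: "objective a n x \<le> objective a n s" if s: "s \<in> radii a" for s
  proof (cases "s \<in> L")
    case True then show ?thesis by (rule xmin)
  next
    case False
    then have "ereal C < objective a n s" using out[OF s] by (cases "s \<in> {\<delta>..K}") (auto simp: L_def)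
    then show ?thesis using OxC by simp
  qed
  define Ms where "Ms = {\<delta>..K} \<inter> objective a n -` {objective a n x}"
  have cM: "compact Ms"
  proof -
    have "closed Ms" unfolding Ms_def by (rule continuous_closed_preimage[OF cont]) auto
    moreover have "bounded Ms" by (rule bounded_subset[of "{\<delta>..K}"]) (auto simp: Ms_def)
    ultimately show ?thesis by (simp add: compact_eq_bounded_closed)
  qed
  have xM: "x \<in> Ms" using xL by (auto simp: Ms_def L_def)
  have "\<exists>mm\<in>Ms. \<forall>y\<in>Ms. id mm \<le> id y"
    by (rule continuous_attains_inf[OF cM _ continuous_on_id']) (use xM in auto)
  then obtain mm where mmM: "mm \<in> Ms" and mmmin: "\<And>y. y \<in> Ms \<Longrightarrow> mm \<le> y"
    by auto
  show ?thesis
  proof (intro bexI[of _ mm] conjI ballI impI)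
    show mmr: "mm \<in> radii a" using mmM K(2) by (auto simp: Ms_def)
    have Omm: "objective a n mm = objective a n x" using mmM by (auto simp: Ms_def)
    show "objective a n mm \<le> objective a n s" if "s \<in> radii a" for s
      unfolding Omm by (rule glob[OF that])
    show "mm \<le> s" if s: "s \<in> radii a" and eq: "objective a n s = objective a n mm" for s
    proof -
      have "s \<in> {\<delta>..K}"
      proof (rule ccontr)
        assume "s \<notin> {\<delta>..K}"
        from out[OF s this] eq Omm OxC show False by simp
      qed
      then have "s \<in> Ms" using eq Omm by (auto simp: Ms_def)
      then show ?thesis by (rule mmmin)
    qed
  qed
qed

lemma opt_prop:
  assumes am: "a m \<noteq> 0" and mn: "m < n"
  shows "opt_radius a n \<in> radii a \<and> (\<forall>s\<in>radii a. objective a n (opt_radius a n) \<le> objective a n s)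
            \<and> (\<forall>s\<in>radii a. objective a n s = objective a n (opt_radius a n) \<longrightarrow> opt_radius a n \<le> s)"
proof -
  define P where "P r \<longleftrightarrow> r \<in> radii a \<and> (\<forall>s\<in>radii a. objective a n r \<le> objective a n s)
            \<and> (\<forall>s\<in>radii a. objective a n s = objective a n r \<longrightarrow> r \<le> s)" for r
  obtain r where r: "P r" using opt_exists[OF am mn] by (auto simp: P_def)
  have uniq: "r' = r" if r': "P r'" for r'
  proof -
    have rr: "r \<in> radii a" "\<forall>s\<in>radii a. objective a n r \<le> objective a n s"
      "\<forall>s\<in>radii a. objective a n s = objective a n r \<longrightarrow> r \<le> s" using r by (simp_all add: P_def)
    have rr': "r' \<in> radii a" "\<forall>s\<in>radii a. objective a n r' \<le> objective a n s"
      "\<forall>s\<in>radii a. objective a n s = objective a n r' \<longrightarrow> r' \<le> s" using r' by (simp_all add: P_def)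
    have eq: "objective a n r' = objective a n r"
      using rr(1,2) rr'(1,2) by (meson antisym)
    have "r \<le> r'" using rr(3) rr'(1) eq by blast
    moreover have "r' \<le> r" using rr'(3) rr(1) eq by metis
    ultimately show ?thesis by simp
  qed
  have "(THE r. P r) = r" by (rule the_equality[where P=P, OF r uniq])
  moreover have "opt_radius a n = (THE r. P r)" unfolding opt_radius_def P_def by simp
  ultimately show ?thesis using r by (simp add: P_def)
qed

end

context fixes a :: "nat \<Rightarrow> complex"
  assumes Rpos: "conv_radius a > 0" and notpoly: "infinite {k. a k \<noteq> 0}"
begin

lemmas optp = opt_prop[OF Rpos notpoly]
lemmas objlt' = objlt[OF Rpos notpoly]
lemmas objpos' = objpos[OF Rpos notpoly]
lemmas M1p' = M1p[OF Rpos notpoly]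
lemmas nz' = nz[OF Rpos notpoly]

lemma obj_Suc': "r \<in> radii a \<Longrightarrow> objective a (Suc n) r = objective a n r * ereal (1/r)"
  by (rule obj_Suc[OF Rpos nz'])

lemma mono_opt:
  assumes am: "a m \<noteq> 0" and mn: "m < n"
  shows "opt_radius a n \<le> opt_radius a (Suc n)"
proof (rule ccontr)
  define r where "r = opt_radius a n"
  define s where "s = opt_radius a (Suc n)"
  assume "\<not> opt_radius a n \<le> opt_radius a (Suc n)"
  then have sr: "s < r" by (simp add: r_def s_def)
  note P1 = optp[OF am mn, folded r_def]
  have mn': "m < Suc n" using mn by simp
  note P2 = optp[OF am mn', folded s_def]
  have rR: "r \<in> radii a" and sR: "s \<in> radii a" using P1 P2 mn by auto
  have "objective a n r \<le> objective a n s" using P1 sR by blast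
  moreover have "objective a n s \<noteq> objective a n r" using P1 sR sr by force
  ultimately have lt: "objective a n r < objective a n s" by simp
  have s0: "0 < s" using sR by (simp add: radii_def)
  have "ereal s < ereal r" using sr by simp
  also have "ereal r \<le> conv_radius a" using rR by (simp add: radii_def)
  finally have s1: "ereal s < conv_radius a" .
  define B where "B = M1 a s / s ^ n"
  have B: "0 < B" unfolding B_def using M1p'[OF s0 s1] s0 by simp
  have Os: "objective a n s = ereal B" unfolding B_def by (rule objlt'[OF s0 s1])
  have r0: "0 < r" using rR by (simp add: radii_def)
  obtain A where OA: "objective a n r = ereal A"
    using lt objpos'[OF rR, of n] Os by (cases "objective a n r") auto
  have AB: "A < B" and A0: "0 < A" using lt Os OA objpos'[OF rR, of n] by auto
  have "objective a (Suc n) s \<le> objective a (Suc n) r" using P2 rR mn by blast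
  then have "B / s \<le> A / r"
    unfolding obj_Suc'[OF sR] obj_Suc'[OF rR] Os OA by simp
  also have "A / r < B / r" using AB r0 by (simp add: divide_strict_right_mono)
  finally have "B / s < B / r" .
  then have "r < s" using B s0 r0 by (simp add: field_simps)
  with sr show False by simp
qed

lemma opt_eventually:
  assumes am: "a m \<noteq> 0" and r0: "0 < r0" "ereal r0 < conv_radius a"
  shows "eventually (\<lambda>n. r0 < opt_radius a n) sequentially"
proof -
  obtain r1 where r1: "ereal r0 < ereal r1" "ereal r1 < conv_radius a"
    using ereal_dense2[OF r0(2)] by blast
  have r01: "r0 < r1" using r1 by simp
  have r1pos: "0 < r1" using r0 r01 by simp
  define c where "c = norm (a m)"
  have c: "0 < c" using am by (simp add: c_def)
  define M where "M = M1 a r1"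
  have "eventually (\<lambda>n. M / (c * r0 ^ m) < (r1 / r0) ^ n) sequentially"
    by (rule Archimedean_eventually_pow) (use r0 r01 in simp)
  moreover have "eventually (\<lambda>n. m < n) sequentially" by (rule eventually_gt_at_top)
  ultimately show ?thesis
  proof eventually_elim
    case (elim n)
    show ?case
    proof (rule ccontr)
      assume "\<not> r0 < opt_radius a n"
      define x where "x = opt_radius a n"
      have xr0: "x \<le> r0" using \<open>\<not> r0 < opt_radius a n\<close> by (simp add: x_def)
      note P = optp[OF am elim(2), folded x_def]
      have x0: "0 < x" using P by (simp add: radii_def)
      have xR: "ereal x < conv_radius a" using xr0 r0(2) by (rule ereal_le_lt)
      have r1R: "r1 \<in> radii a" using r1 r01 r0 by (simp add: radii_def)
      have "objective a n x \<le> objective a n r1" using P r1R by blast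
      then have le: "M1 a x / x ^ n \<le> M / r1 ^ n"
        unfolding objlt'[OF x0 xR] objlt'[OF r1pos r1(2)] M_def by simp
      have "c / r0 ^ (n - m) \<le> c / x ^ (n - m)"
        using x0 xr0 c by (intro divide_left_mono power_mono mult_pos_pos) auto
      also have "\<dots> \<le> M1 a x / x ^ n"
        unfolding c_def by (rule low_bound[OF Rpos notpoly am elim(2) x0 xR])
      finally have "c / r0 ^ (n - m) \<le> M / r1 ^ n" using le by simp
      then have A: "c * r1 ^ n \<le> M * r0 ^ (n - m)" using r0 r01 by (simp add: field_simps)
      have rn: "r0 ^ n = r0 ^ m * r0 ^ (n - m)" using elim(2) by (simp flip: power_add)
      from elim(1) have "M / (c * r0 ^ m) < r1 ^ n / r0 ^ n" by (simp add: power_divide)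
      then have "M * r0 ^ n < c * r0 ^ m * r1 ^ n" using r0 c by (simp add: field_simps)
      then have "r0 ^ m * (M * r0 ^ (n - m)) < r0 ^ m * (c * r1 ^ n)" unfolding rn by (simp add: algebra_simps)
      then have "M * r0 ^ (n - m) < c * r1 ^ n" using r0 by (simp add: mult_less_cancel_left_pos)
      with A show False by simp
    qed
  qed
qed

lemma opt_tendsto:
  assumes am: "a m \<noteq> 0"
  shows "((\<lambda>n. ereal (opt_radius a n)) \<longlongrightarrow> conv_radius a) sequentially"
proof (rule order_tendstoI)
  fix b assume b: "b < conv_radius a"
  show "eventually (\<lambda>n. b < ereal (opt_radius a n)) sequentially"
  proof (cases "b \<le> 0")
    case True
    have "eventually (\<lambda>n. m < n) sequentially" by (rule eventually_gt_at_top)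
    then show ?thesis
    proof eventually_elim
      case (elim n)
      then have "0 < opt_radius a n" using optp[OF am elim] by (simp add: radii_def)
      with True show ?case by (simp add: zero_ereal_def[symmetric] le_less_trans)
    qed
  next
    case False
    then obtain b' where b': "b = ereal b'" "0 < b'" using b by (cases b) auto
    show ?thesis using opt_eventually[OF am b'(2)] b b' by simp
  qed
next
  fix b assume b: "conv_radius a < b"
  have "eventually (\<lambda>n. m < n) sequentially" by (rule eventually_gt_at_top)
  then show "eventually (\<lambda>n. ereal (opt_radius a n) < b) sequentially"
  proof eventually_elim
    case (elim n)
    then have "ereal (opt_radius a n) \<le> conv_radius a" using optp[OF am elim] by (simp add: radii_def)
    with b show ?case by simp
  qed
qed

end

context fixes a :: "nat \<Rightarrow> complex"
  assumes Rpos: "conv_radius a > 0" and notpoly: "infinite {k. a k \<noteq> 0}"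
begin

lemmas optp2 = optp[OF Rpos notpoly]
lemmas objlt2 = objlt'[OF Rpos notpoly]
lemmas M1p2 = M1p'[OF Rpos notpoly]
lemmas nz2 = nz'[OF Rpos notpoly]

lemma deriv_le:
  assumes R0: "conv_radius a = ereal R0"
    and minR: "\<And>s. s \<in> radii a \<Longrightarrow> objective a n R0 \<le> objective a n s"
    and H: "H1norm a = ereal H"
    and r0: "0 < r0" "r0 < R0"
    and D: "(sigma a has_real_derivative D) (at r0)"
  shows "r0 * D \<le> real n"
proof (rule ccontr)
  assume "\<not> r0 * D \<le> real n"
  then have nD: "real n < r0 * D" by simp
  obtain x where x: "x \<in> \<rat>" "real n < x" "x < r0 * D" using Rats_dense_in_real[OF nD] by blast
  obtain p q :: nat where q: "q \<noteq> 0" and pq: "\<bar>x\<bar> = real p / real q"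
    using Rats_abs_nat_div_natE[OF x(1)] by metis
  have x0: "0 \<le> x" using x(2) by (meson of_nat_0_le_iff order_trans less_imp_le)
  have xpq: "x = real p / real q" using pq x0 by simp
  have qpos: "0 < real q" using q by simp
  have np: "real n * real q < real p" using x(2) qpos unfolding xpq by (simp add: field_simps)
  have pD: "real p < r0 * D * real q" using x(3) qpos unfolding xpq by (simp add: field_simps)
  have R0pos: "0 < R0" using r0 by simp
  have eR: "ereal r < conv_radius a" if "r < R0" for r using that R0 by simp
  define h where "h r = real q * sigma a r - real p * ln r" for r
  define G where "G r = M1 a r ^ q / r ^ p" for r
  have Gpos: "0 < G r" if "0 < r" "r < R0" for r
    unfolding G_def using M1p2[OF that(1) eR[OF that(2)]] that by simp
  have hG: "h r = ln (G r)" if "0 < r" "r < R0" for r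
  proof -
    have "0 < M1 a r" using M1p2[OF that(1) eR[OF that(2)]] .
    then show ?thesis using that
      by (simp add: h_def G_def sigma_def ln_div ln_realpow)
  qed
  have dh: "(h has_real_derivative real q * D - real p * (1 / r0)) (at r0)"
    unfolding h_def[abs_def]
    by (intro DERIV_diff DERIV_cmult D DERIV_ln_divide r0)
  have dpos: "0 < real q * D - real p * (1 / r0)"
  proof -
    have "real p / r0 < D * real q" using pD r0 by (simp add: field_simps)
    then show ?thesis by (simp add: field_simps)
  qed
  obtain d where d: "d > 0" "\<And>t. t > 0 \<Longrightarrow> t < d \<Longrightarrow> h (r0 - t) < h r0"
    using DERIV_pos_inc_left[OF dh dpos] by blast
  define r1 where "r1 = r0 - min (d/2) (r0/2)"
  have r1: "0 < r1" "r1 < r0" using d r0 by (auto simp: r1_def)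
  have "h r1 < h r0" unfolding r1_def using d r0 by (intro d(2)) auto
  then have G1: "G r1 < G r0"
    using hG[OF r1(1)] hG[OF r0] Gpos[OF r1(1)] Gpos[OF r0] r1 r0 by simp
  have M1lim: "(M1 a \<longlongrightarrow> H) (at_left R0)"
    using H1_lim(1)[OF R0 R0pos] H by simp
  have Glim: "(G \<longlongrightarrow> H ^ q / R0 ^ p) (at_left R0)"
    unfolding G_def[abs_def] using R0pos by (intro tendsto_intros M1lim) auto
  have Hpos: "0 < H"
  proof -
    have "ereal (M1 a r0) \<le> H1norm a" using H1_ge[OF Rpos nz2 R0 r0] .
    then show ?thesis using M1p2[OF r0(1) eR[OF r0(2)]] H by simp
  qed
  have L: "H ^ q / R0 ^ p < G r0"
  proof -
    have "r0 \<in> radii a" using r0 R0 by (simp add: radii_def)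
    from minR[OF this] have "H1norm a / ereal (R0 ^ n) \<le> ereal (M1 a r0 / r0 ^ n)"
      unfolding obj_R[OF Rpos nz2 R0] objlt2[OF r0(1) eR[OF r0(2)]] .
    then have AB: "H / R0 ^ n \<le> M1 a r0 / r0 ^ n"
      using R0pos by (simp add: ereal_div_pos H)
    define k where "k = p - n * q"
    have k: "0 < k" using np unfolding k_def by (metis of_nat_less_iff of_nat_mult zero_less_diff)
    have pk: "p = n * q + k" using np unfolding k_def by (metis le_add_diff_inverse less_imp_le of_nat_less_iff of_nat_mult)
    have "H ^ q / R0 ^ p = (H / R0 ^ n) ^ q / R0 ^ k"
      unfolding pk by (simp add: power_add power_mult power_divide field_simps)
    also have "\<dots> \<le> (M1 a r0 / r0 ^ n) ^ q / R0 ^ k"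
      using AB Hpos R0pos by (intro divide_right_mono power_mono) auto
    also have "\<dots> < (M1 a r0 / r0 ^ n) ^ q / r0 ^ k"
      using M1p2[OF r0(1) eR[OF r0(2)]] r0 k
      by (intro divide_strict_left_mono power_strict_mono zero_less_power mult_pos_pos) auto
    also have "\<dots> = G r0"
      unfolding G_def pk by (simp add: power_add power_mult power_divide field_simps)
    finally show ?thesis .
  qed
  have "eventually (\<lambda>r. G r < G r0) (at_left R0)"
    by (rule order_tendstoD(2)[OF Glim L])
  moreover have "eventually (\<lambda>r. r \<in> {r0<..<R0}) (at_left R0)"
    by (rule eventually_at_left_real[OF r0(2)])
  ultimately have "eventually (\<lambda>r. G r < G r0 \<and> r \<in> {r0<..<R0}) (at_left R0)"
    by eventually_elim auto
  then obtain r2 where r2: "G r2 < G r0" "r0 < r2" "r2 < R0"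
    using eventually_happens'[OF trivial_limit_at_left_real] by auto
  have "G r0 \<le> max (G r1) (G r2)"
    unfolding G_def
    by (rule M1_qc) (use r1 r2 R0 M1p2[OF r0(1) eR[OF r0(2)]] in auto)
  with G1 r2(1) show False by simp
qed

lemma part3:
  assumes am: "a m \<noteq> 0" and mn: "m < n" and eq: "ereal (opt_radius a n) = conv_radius a"
  shows "conv_radius a < \<infinity> \<and> H1norm a < \<infinity> \<and> nu a < \<infinity>"
proof -
  define R0 where "R0 = opt_radius a n"
  note P = optp2[OF am mn, folded R0_def]
  have R0: "conv_radius a = ereal R0" using eq by (simp add: R0_def)
  have R0pos: "0 < R0" using P by (simp add: radii_def)
  have minR: "\<And>s. s \<in> radii a \<Longrightarrow> objective a n R0 \<le> objective a n s" using P by blast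
  have hr: "R0/2 \<in> radii a" using R0pos R0 by (simp add: radii_def)
  have "objective a n R0 \<le> objective a n (R0/2)" by (rule minR[OF hr])
  also have "\<dots> = ereal (M1 a (R0/2) / (R0/2) ^ n)" using R0pos R0 by (intro objlt2) auto
  finally have le: "H1norm a * ereal (1 / R0 ^ n) \<le> ereal (M1 a (R0/2) / (R0/2) ^ n)"
    unfolding obj_R[OF Rpos nz2 R0] using R0pos by (simp add: ereal_div_pos)
  have Hfin: "H1norm a < \<infinity>"
  proof (rule ccontr)
    assume "\<not> H1norm a < \<infinity>"
    then have "H1norm a = \<infinity>" by simp
    with le R0pos show False by simp
  qed
  have H0: "0 < H1norm a" using H1_pos[OF Rpos nz2 R0] .
  obtain H where H: "H1norm a = ereal H" using Hfin H0 by (cases "H1norm a") auto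
  define c0 where "c0 = (SOME D::real. False)"
  have bound: "ereal (r * deriv (sigma a) r) \<le> ereal (max (real n) (R0 * \<bar>c0\<bar>))"
    if r: "r \<in> {r. 0 < r \<and> ereal r < conv_radius a}" for r
  proof -
    have r0: "0 < r" "r < R0" using r R0 by auto
    show ?thesis
    proof (cases "\<exists>D. (sigma a has_real_derivative D) (at r)")
      case True
      then obtain D where D: "(sigma a has_real_derivative D) (at r)" by blast
      have "r * D \<le> real n" by (rule deriv_le[OF R0 minR H r0 D])
      then have "r * deriv (sigma a) r \<le> max (real n) (R0 * \<bar>c0\<bar>)" using DERIV_imp_deriv[OF D] by simp
      then show ?thesis by (simp only: ereal_less_eq)
    next
      case False
      then have "deriv (sigma a) r = c0" unfolding deriv_def c0_def by simp
      moreover have "r * c0 \<le> R0 * \<bar>c0\<bar>"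
        using r0 by (smt (verit) abs_ge_self mult_left_mono mult_right_mono abs_ge_zero)
      ultimately have "r * deriv (sigma a) r \<le> max (real n) (R0 * \<bar>c0\<bar>)" by simp
      then show ?thesis by (simp only: ereal_less_eq)
    qed
  qed
  have "nu a \<le> ereal (max (real n) (R0 * \<bar>c0\<bar>))"
    unfolding nu_def by (rule SUP_least) (rule bound)
  moreover have "ereal (max (real n) (R0 * \<bar>c0\<bar>)) < \<infinity>" by (simp only: less_ereal.simps)
  ultimately have "nu a < \<infinity>" by (rule le_less_trans)
  with Hfin R0 show ?thesis by simp
qed

end

context fixes a :: "nat \<Rightarrow> complex"
  assumes Rpos: "conv_radius a > 0" and notpoly: "infinite {k. a k \<noteq> 0}"
begin

lemmas optp3 = optp2[OF Rpos notpoly]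
lemmas objlt3 = objlt2[OF Rpos notpoly]
lemmas M1p3 = M1p2[OF Rpos notpoly]

lemma part4:
  assumes am: "a m \<noteq> 0" and mn: "m < n" and R0: "conv_radius a = ereal R0"
    and nun: "nu a < ereal (real n)"
  shows "ereal (opt_radius a n) = conv_radius a"
proof (rule ccontr)
  assume neq: "ereal (opt_radius a n) \<noteq> conv_radius a"
  define x where "x = opt_radius a n"
  note P = optp3[OF am mn, folded x_def]
  have x0: "0 < x" using P by (simp add: radii_def)
  have xR: "ereal x < conv_radius a" using P neq by (auto simp: radii_def x_def)
  obtain \<beta> where \<beta>: "x < \<beta>" "ereal \<beta> < conv_radius a"
    and zf: "\<And>z. x < norm z \<Longrightarrow> norm z < \<beta> \<Longrightarrow> pser a z \<noteq> 0"
    using zero_free[OF am x0 xR] by blast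
  define y where "y = (x + \<beta>) / 2"
  have y: "x < y" "y < \<beta>" using \<beta> by (auto simp: y_def)
  have eR: "ereal t < conv_radius a" if "t \<le> y" for t
    using that y \<beta>(2) by (meson ereal_le_lt less_imp_le order_trans)
  define g where "g t = M1 a t / t ^ n" for t
  have n1: "1 \<le> n" using mn by simp
  have dec: "g y < g x"
  proof (rule DERIV_neg_imp_decreasing_open[OF y(1)])
    fix t assume t: "x < t" "t < y"
    have t0: "0 < t" using t x0 by simp
    obtain D where D: "(M1 a has_real_derivative D) (at t)"
      using M1_has_deriv[OF x0 t(1) _ \<beta>(2) zf] t y by auto
    have Mt: "0 < M1 a t" using M1p3[OF t0 eR] t by simp
    have ds: "(sigma a has_real_derivative D / M1 a t) (at t)"
    proof -
      have "((\<lambda>r. ln (M1 a r)) has_real_derivative 1 / M1 a t * D) (at t)"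
        by (rule DERIV_chain2[OF DERIV_ln_divide[OF Mt] D])
      then show ?thesis by (simp add: sigma_def[abs_def])
    qed
    have "ereal (t * deriv (sigma a) t) \<le> nu a"
      unfolding nu_def by (rule SUP_upper) (use t0 eR t in auto)
    then have "ereal (t * (D / M1 a t)) < ereal (real n)"
      using nun DERIV_imp_deriv[OF ds] by (metis le_less_trans)
    then have "t * (D / M1 a t) < real n" by (simp only: less_ereal.simps)
    then have tD: "t * D < real n * M1 a t" using Mt by (simp add: field_simps)
    have dg: "(g has_real_derivative (D * t ^ n - M1 a t * (real n * t ^ (n - Suc 0))) / (t ^ n * t ^ n)) (at t)"
      unfolding g_def[abs_def] by (rule DERIV_divide[OF D DERIV_pow]) (use t0 in simp)
    have tn: "t ^ n = t * t ^ (n - Suc 0)" using n1 by (simp flip: power_Suc)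
    have "D * t ^ n - M1 a t * (real n * t ^ (n - Suc 0)) = t ^ (n - Suc 0) * (t * D - real n * M1 a t)"
      unfolding tn by (simp add: algebra_simps)
    moreover have "t ^ (n - Suc 0) * (t * D - real n * M1 a t) < 0"
      using tD t0 by (intro mult_pos_neg) auto
    ultimately have "(D * t ^ n - M1 a t * (real n * t ^ (n - Suc 0))) / (t ^ n * t ^ n) < 0"
      using t0 by (simp add: divide_neg_pos)
    with dg show "\<exists>y. (g has_real_derivative y) (at t) \<and> y < 0" by blast
  next
    show "continuous_on {x..y} g"
    proof (intro continuous_at_imp_continuous_on ballI)
      fix t assume t: "t \<in> {x..y}"
      then have "0 < t" "0 \<le> t" using x0 by auto
      then show "isCont g t" unfolding g_def[abs_def]
        using t by (intro continuous_intros M1_isCont eR) auto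
    qed
  qed
  have yr: "y \<in> radii a" using y x0 eR[of y] by (simp add: radii_def less_imp_le)
  have "objective a n x \<le> objective a n y" using P yr by blast
  have y0: "0 < y" using x0 y by simp
  have "g x \<le> g y" using \<open>objective a n x \<le> objective a n y\<close>
    unfolding objlt3[OF x0 xR] objlt3[OF y0 eR[of y, OF order_refl]] g_def by simp
  with dec show False by simp
qed

end

theorem theorem4p6:
  fixes a :: "nat \<Rightarrow> complex"
  assumes Rpos: "conv_radius a > 0"
    and notpoly: "infinite {k. a k \<noteq> 0}"
  defines "n0 \<equiv> (LEAST k. a k \<noteq> 0)"
  shows "(\<forall>n>n0. opt_radius a n \<le> opt_radius a (Suc n))
    \<and> ((\<lambda>n. ereal (opt_radius a n)) \<longlonglongrightarrow> conv_radius a)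
    \<and> (\<forall>n>n0. ereal (opt_radius a n) = conv_radius a \<longrightarrow>
          conv_radius a < \<infinity> \<and> H1norm a < \<infinity> \<and> nu a < \<infinity>)
    \<and> (\<forall>n>n0. conv_radius a < \<infinity> \<and> H1norm a < \<infinity> \<and> nu a < ereal (real n) \<longrightarrow>
          ereal (opt_radius a n) = conv_radius a)"
proof -
  have an0: "a n0 \<noteq> 0" unfolding n0_def using nz[OF Rpos notpoly] by (rule LeastI_ex)
  have p1: "\<forall>n>n0. opt_radius a n \<le> opt_radius a (Suc n)"
    using mono_opt[OF Rpos notpoly an0] by blast
  have p2: "(\<lambda>n. ereal (opt_radius a n)) \<longlonglongrightarrow> conv_radius a"
    by (rule opt_tendsto[OF Rpos notpoly an0])
  have p3: "\<forall>n>n0. ereal (opt_radius a n) = conv_radius a \<longrightarrow>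
          conv_radius a < \<infinity> \<and> H1norm a < \<infinity> \<and> nu a < \<infinity>"
    using part3[OF Rpos notpoly an0] by blast
  have p4: "\<forall>n>n0. conv_radius a < \<infinity> \<and> H1norm a < \<infinity> \<and> nu a < ereal (real n) \<longrightarrow>
          ereal (opt_radius a n) = conv_radius a"
  proof (intro allI impI)
    fix n assume mn: "n0 < n" and h: "conv_radius a < \<infinity> \<and> H1norm a < \<infinity> \<and> nu a < ereal (real n)"
    obtain R0 where R0: "conv_radius a = ereal R0" using h Rpos by (cases "conv_radius a") auto
    show "ereal (opt_radius a n) = conv_radius a"
      by (rule part4[OF Rpos notpoly an0 mn R0]) (use h in simp)
  qed
  show ?thesis using p1 p2 p3 p4 by blast
qed

end
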